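(* Let $E$ be a reflexive Banach space with $E = V \oplus W$ ($V, W$ linear subspaces, $\dim V < +\infty$), and let $\Phi\colon E \to \mathbb{R}$ be locally Lipschitz and satisfy: (i) $\Phi(w) \to +\infty$ as $\|w\| \to \infty$, $w \in W$; (ii$''$) for every $w \in W$, the map $v \mapsto \Phi(v+w)$ is strictly quasi-concave on $V$; (iii) $\Phi(v+w) \to -\infty$ as $\|v\| \to +\infty$ ($v \in V$), uniformly for $w$ in bounded subsets of $W$; (iv) for every $v \in V$, the map $w \mapsto \Phi(v+w)$ is weakly lower semi-continuous on $W$. Then, writing $s(w)$ for the unique maximizer of $v\mapsto\Phi(v+w)$ on $V$, there is $\overline{w}\in W$ minimizing $w\mapsto\max_{v\in V}\Phi(v+w)$ such that $\overline{u} = s(\overline{w}) + \overline{w}$ is a critical point of $\Phi$ (i.e. $0 \in \partial\Phi(\overline{u})$) and $$\Phi(\overline{u}) = \min_{w \in W} \max_{v \in V} \Phi(v+w).$$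
   Context: A function $f\colon V\to\mathbb{R}$ is strictly quasi-concave if $f(tx+(1-t)y) > \min\{f(x),f(y)\}$ for all $x \neq y$ in $V$ and $t \in (0,1)$. For a locally Lipschitz $\Phi$, $\Phi^\circ(x;v) = \limsup_{y \to x,\, t \downarrow 0} \frac{\Phi(y+tv) - \Phi(y)}{t}$ and the Clarke subdifferential is $\partial\Phi(x) = \{x^* \in E^* : \Phi^\circ(x;v) \ge \langle x^*, v\rangle \ \forall v \in E\}$; $x$ is a critical point if $0 \in \partial\Phi(x)$. *)

theory Defs
  imports "HOL-Analysis.Analysis"
begin

definition reflexive_space :: "'a::real_normed_vector itself \<Rightarrow> bool" where
  "reflexive_space _ \<longleftrightarrow>
     (\<forall>\<phi> :: ('a \<Rightarrow>\<^sub>L real) \<Rightarrow>\<^sub>L real. \<exists>x::'a. \<forall>f. blinfun_apply \<phi> f = blinfun_apply f x)"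

definition locally_lipschitz :: "('a::real_normed_vector \<Rightarrow> real) \<Rightarrow> bool" where
  "locally_lipschitz \<Phi> \<longleftrightarrow>
     (\<forall>x. \<exists>\<epsilon>>0. \<exists>L. \<forall>y\<in>ball x \<epsilon>. \<forall>z\<in>ball x \<epsilon>. \<bar>\<Phi> y - \<Phi> z\<bar> \<le> L * norm (y - z))"

definition strictly_quasi_concave_on :: "'a::real_vector set \<Rightarrow> ('a \<Rightarrow> real) \<Rightarrow> bool" where
  "strictly_quasi_concave_on S f \<longleftrightarrow>
     (\<forall>x\<in>S. \<forall>y\<in>S. \<forall>t::real. x \<noteq> y \<and> 0 < t \<and> t < 1 \<longrightarrow>
        f (t *\<^sub>R x + (1 - t) *\<^sub>R y) > min (f x) (f y))"

text \<open>Weak lower semicontinuity on S (weak topology of E relativised to S),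
  using the standard neighbourhood basis of the weak topology.\<close>
definition weakly_lsc_on :: "'a::real_normed_vector set \<Rightarrow> ('a \<Rightarrow> real) \<Rightarrow> bool" where
  "weakly_lsc_on S g \<longleftrightarrow>
     (\<forall>w0\<in>S. \<forall>c. c < g w0 \<longrightarrow>
        (\<exists>F :: ('a \<Rightarrow>\<^sub>L real) set. \<exists>\<epsilon>>0. finite F \<and>
           (\<forall>w\<in>S. (\<forall>f\<in>F. \<bar>blinfun_apply f (w - w0)\<bar> < \<epsilon>) \<longrightarrow> c < g w)))"

definition clarke_dd :: "('a::real_normed_vector \<Rightarrow> real) \<Rightarrow> 'a \<Rightarrow> 'a \<Rightarrow> ereal" where
  "clarke_dd \<Phi> x v =
     Limsup (nhds x \<times>\<^sub>F at_right (0::real)) (\<lambda>(y, t). ereal ((\<Phi> (y + t *\<^sub>R v) - \<Phi> y) / t))"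

definition clarke_subdiff :: "('a::real_normed_vector \<Rightarrow> real) \<Rightarrow> 'a \<Rightarrow> ('a \<Rightarrow>\<^sub>L real) set" where
  "clarke_subdiff \<Phi> x = {xs. \<forall>v. clarke_dd \<Phi> x v \<ge> ereal (blinfun_apply xs v)}"

end

theory Submission
  imports Defs
begin



lemma eps_zero:
  fixes a b :: real
  assumes "\<And>e. e > 0 \<Longrightarrow> \<bar>a - b\<bar> < C * e" and "C > 0"
  shows "a = b"
proof (rule ccontr)
  assume "a \<noteq> b"
  then have "\<bar>a - b\<bar> / C > 0" using assms by auto
  then have "\<bar>a - b\<bar> < C * (\<bar>a - b\<bar> / C)" by (rule assms(1))
  then show False using \<open>C > 0\<close> by simp
qed

lemma weak_cluster:
  fixes F :: "'a::real_normed_vector filter"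
  assumes refl: "reflexive_space TYPE('a)" and Fnb: "F \<noteq> bot"
    and bnd: "eventually (\<lambda>u. norm u \<le> R) F"
  shows "\<exists>x. \<forall>G::('a \<Rightarrow>\<^sub>L real) set. finite G \<longrightarrow> (\<forall>\<epsilon>>0. \<exists>\<^sub>F u in F. \<forall>f\<in>G. \<bar>blinfun_apply f u - blinfun_apply f x\<bar> < \<epsilon>)"
proof -
  define J where "J = (\<lambda>u::'a. \<lambda>f::'a \<Rightarrow>\<^sub>L real. blinfun_apply f u)"
  define K where "K = PiE UNIV (\<lambda>f::'a \<Rightarrow>\<^sub>L real. cball (0::real) (R * norm f))"
  have "compactin (product_topology (\<lambda>i. euclidean) UNIV) K"
    unfolding K_def compactin_PiE by auto
  then have cK: "compact K" by (simp add: euclidean_product_topology)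
  have evK: "eventually (\<lambda>\<phi>. \<phi> \<in> K) (filtermap J F)"
    unfolding eventually_filtermap
  proof (rule eventually_mono[OF bnd])
    fix u :: 'a assume "norm u \<le> R"
    have "\<bar>blinfun_apply f u\<bar> \<le> R * norm f" for f
    proof -
      have "\<bar>blinfun_apply f u\<bar> \<le> norm f * norm u" using norm_blinfun[of f u] by simp
      also have "\<dots> \<le> norm f * R" using \<open>norm u \<le> R\<close> by (simp add: mult_left_mono)
      finally show ?thesis by (simp add: mult.commute)
    qed
    then show "J u \<in> K" unfolding K_def J_def by (auto simp: dist_real_def)
  qed
  have "filtermap J F \<noteq> bot" using Fnb by (simp add: filtermap_bot_iff)
  with cK evK obtain \<phi> where "\<phi> \<in> K" and clu: "inf (nhds \<phi>) (filtermap J F) \<noteq> bot"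
    unfolding compact_filter by blast
  have nb: "\<exists>\<^sub>F u in F. \<forall>f\<in>G. \<bar>blinfun_apply f u - \<phi> f\<bar> < \<epsilon>" if "finite G" "\<epsilon> > 0" for G \<epsilon>
  proof (rule ccontr)
    assume nf: "\<not> ?thesis"
    define U where "U = {\<psi>. \<forall>f\<in>G. \<psi> (id f) \<in> ball (\<phi> f) \<epsilon>}"
    have "open U" unfolding U_def by (rule product_topology_basis') (use that in auto)
    moreover have "\<phi> \<in> U" unfolding U_def using that by auto
    ultimately have e1: "eventually (\<lambda>\<psi>. \<psi> \<in> U) (nhds \<phi>)" by (rule eventually_nhds_in_open)
    have e2: "eventually (\<lambda>\<psi>. \<psi> \<notin> U) (filtermap J F)"
      using nf unfolding frequently_def eventually_filtermap U_def J_def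
      by (auto simp: dist_real_def abs_minus_commute elim!: eventually_mono)
    have "eventually (\<lambda>_. False) (inf (nhds \<phi>) (filtermap J F))"
      unfolding eventually_inf using e1 e2 by blast
    with clu show False by (simp add: eventually_False)
  qed
  have ex: "\<exists>u. \<forall>f\<in>G. \<bar>blinfun_apply f u - \<phi> f\<bar> < \<epsilon>" if "finite G" "\<epsilon> > 0" for G \<epsilon>
    using frequently_ex[OF nb[OF that]] .
  have add: "\<phi> (f + g) = \<phi> f + \<phi> g" for f g
  proof (rule eps_zero[where C=3])
    fix e :: real assume "e > 0"
    then obtain u where u: "\<forall>h\<in>{f, g, f + g}. \<bar>blinfun_apply h u - \<phi> h\<bar> < e"
      using ex[of "{f, g, f+g}" e] by auto
    then show "\<bar>\<phi> (f + g) - (\<phi> f + \<phi> g)\<bar> < 3 * e"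
      by (auto simp: blinfun.add_left)
  qed simp
  have scl: "\<phi> (r *\<^sub>R f) = r * \<phi> f" for r f
  proof (rule eps_zero[where C="1 + \<bar>r\<bar>"])
    fix e :: real assume "e > 0"
    then obtain u where u: "\<forall>h\<in>{f, r *\<^sub>R f}. \<bar>blinfun_apply h u - \<phi> h\<bar> < e"
      using ex[of "{f, r *\<^sub>R f}" e] by auto
    then have a: "\<bar>r * blinfun_apply f u - \<phi> (r *\<^sub>R f)\<bar> < e" and b: "\<bar>blinfun_apply f u - \<phi> f\<bar> < e"
      by (auto simp: blinfun.scaleR_left)
    have "\<bar>r * blinfun_apply f u - r * \<phi> f\<bar> \<le> \<bar>r\<bar> * e"
      using b by (metis abs_ge_zero abs_mult less_imp_le mult_left_mono right_diff_distrib)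
    with a show "\<bar>\<phi> (r *\<^sub>R f) - r * \<phi> f\<bar> < (1 + \<bar>r\<bar>) * e" by (simp add: algebra_simps)
  qed (auto)
  have bd: "norm (\<phi> f) \<le> norm f * R" for f
    using \<open>\<phi> \<in> K\<close> unfolding K_def by (auto simp: PiE_iff mult.commute)
  have "bounded_linear \<phi>"
  proof (rule bounded_linear_intro[where K=R])
    show "\<phi> (x + y) = \<phi> x + \<phi> y" for x y by (rule add)
    show "\<phi> (r *\<^sub>R x) = r *\<^sub>R \<phi> x" for r x using scl by simp
    show "norm (\<phi> x) \<le> norm x * R" for x by (rule bd)
  qed
  then have app: "blinfun_apply (Blinfun \<phi>) = \<phi>" by (rule bounded_linear_Blinfun_apply)
  from refl obtain x where x: "\<forall>f. blinfun_apply (Blinfun \<phi>) f = blinfun_apply f x"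
    unfolding reflexive_space_def by blast
  have phx: "\<phi> f = blinfun_apply f x" for f using x unfolding app by simp
  show ?thesis
  proof (intro exI[of _ x] allI impI)
    fix G :: "('a \<Rightarrow>\<^sub>L real) set" and \<epsilon> :: real assume "finite G" "\<epsilon> > 0"
    show "\<exists>\<^sub>F u in F. \<forall>f\<in>G. \<bar>blinfun_apply f u - blinfun_apply f x\<bar> < \<epsilon>"
      using nb[OF \<open>finite G\<close> \<open>\<epsilon> > 0\<close>] unfolding phx .
  qed
qed



lemma cont_coord_sum:
  "continuous_on A (\<lambda>c::'a \<Rightarrow> real. (\<Sum>b\<in>B. c b *\<^sub>R (b::'a::real_normed_vector)))"
  by (intro continuous_intros continuous_on_subset[OF continuous_on_product_coordinates]) auto

lemma fd_core:
  fixes B W :: "'a::real_normed_vector set"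
  assumes finB: "finite B" and indB: "independent B" and clW: "closed W" and subW: "subspace W"
    and int: "span B \<inter> W = {0}"
  shows "\<exists>\<delta>>0. \<forall>c. \<forall>w\<in>W. \<delta> * (\<Sum>b\<in>B. \<bar>c b\<bar>) \<le> norm ((\<Sum>b\<in>B. c b *\<^sub>R b) + w)"
proof (cases "B = {}")
  case True
  then show ?thesis by (intro exI[of _ 1]) auto
next
  case False
  then obtain b0 where b0: "b0 \<in> B" by auto
  define L where "L = (\<lambda>c::'a \<Rightarrow> real. (\<Sum>b\<in>B. c b *\<^sub>R b))"
  define P where "P = PiE UNIV (\<lambda>i::'a. if i \<in> B then {-1..1::real} else {0})"
  define S where "S = P \<inter> {c. (\<Sum>b\<in>B. \<bar>c b\<bar>) = 1}"
  have "compactin (product_topology (\<lambda>i. euclidean) UNIV) P"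
    unfolding P_def compactin_PiE by auto
  then have "compact P" by (simp add: euclidean_product_topology)
  moreover have "closed {c::'a\<Rightarrow>real. (\<Sum>b\<in>B. \<bar>c b\<bar>) = 1}"
    by (intro closed_Collect_eq continuous_intros continuous_on_subset[OF continuous_on_product_coordinates]) auto
  ultimately have cS: "compact S" unfolding S_def by auto
  define c1 where "c1 = (\<lambda>i::'a. if i = b0 then 1 else (0::real))"
  have "c1 \<in> S" using b0 finB unfolding S_def P_def c1_def
    by (auto simp: PiE_iff if_distrib cong: if_cong)
  then have neS: "S \<noteq> {}" by auto
  have cg: "continuous_on S (\<lambda>c. infdist (L c) W)"
    unfolding L_def by (intro continuous_on_infdist cont_coord_sum)
  obtain c0 where c0: "c0 \<in> S" and min: "\<forall>c\<in>S. infdist (L c0) W \<le> infdist (L c) W"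
    using continuous_attains_inf[OF cS neS cg] by blast
  define \<delta> where "\<delta> = infdist (L c0) W"
  have W0: "0 \<in> W" using subW by (simp add: subspace_0)
  have "\<delta> > 0"
  proof (rule ccontr)
    assume "\<not> \<delta> > 0"
    then have "infdist (L c0) W = 0" unfolding \<delta>_def using infdist_nonneg[of "L c0" W] by linarith
    then have "L c0 \<in> closure W" using in_closure_iff_infdist_zero[of W] W0 by auto
    then have "L c0 \<in> W" using clW by simp
    moreover have "L c0 \<in> span B" unfolding L_def
      by (intro span_sum span_scale span_base) auto
    ultimately have "L c0 = 0" using int by auto
    then have "\<forall>v\<in>B. c0 v = 0" using indB finB unfolding L_def
      by (auto simp: dependent_finite)
    then have "(\<Sum>b\<in>B. \<bar>c0 b\<bar>) = 0" by simp
    with c0 show False unfolding S_def by simp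
  qed
  have "\<forall>c. \<forall>w\<in>W. \<delta> * (\<Sum>b\<in>B. \<bar>c b\<bar>) \<le> norm (L c + w)"
  proof (intro allI ballI)
    fix c :: "'a \<Rightarrow> real" and w assume wW: "w \<in> W"
    define s where "s = (\<Sum>b\<in>B. \<bar>c b\<bar>)"
    show "\<delta> * s \<le> norm (L c + w)"
    proof (cases "s = 0")
      case True then show ?thesis by simp
    next
      case False
      then have spos: "s > 0" unfolding s_def by (metis sum_nonneg abs_ge_zero order_less_le)
      define c' where "c' = (\<lambda>i. if i \<in> B then c i / s else 0)"
      have le: "\<bar>c i\<bar> \<le> s" if "i \<in> B" for i
        unfolding s_def using finB that by (intro member_le_sum) auto
      have "c' \<in> P" unfolding P_def c'_def using le spos
        by (auto simp: PiE_iff divide_le_eq le_divide_eq abs_le_iff) (smt (verit))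
      moreover have "(\<Sum>b\<in>B. \<bar>c' b\<bar>) = 1" unfolding c'_def using spos
        by (simp add: sum_divide_distrib[symmetric] s_def)
      ultimately have "c' \<in> S" unfolding S_def by auto
      then have "\<delta> \<le> infdist (L c') W" using min unfolding \<delta>_def by auto
      also have "\<dots> \<le> dist (L c') (- ((1/s) *\<^sub>R w))"
        by (rule infdist_le) (use wW subW in \<open>simp add: subspace_neg subspace_scale\<close>)
      also have "L c' = (1/s) *\<^sub>R L c" unfolding L_def c'_def
        by (simp add: scaleR_sum_right)
      also have "dist ((1/s) *\<^sub>R L c) (- ((1/s) *\<^sub>R w)) = norm (L c + w) / s"
        using spos by (simp add: dist_norm scaleR_add_right[symmetric])
      finally show ?thesis using spos by (simp add: le_divide_eq mult.commute)
    qed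
  qed
  then show ?thesis using \<open>\<delta> > 0\<close> unfolding L_def by blast
qed

lemma fd_compact:
  fixes B :: "'a::real_normed_vector set"
  assumes finB: "finite B" and indB: "independent B"
  shows "compact (span B \<inter> cball 0 r)"
proof -
  obtain \<delta> where dpos: "\<delta> > 0" and core: "\<forall>c. \<delta> * (\<Sum>b\<in>B. \<bar>c b\<bar>) \<le> norm (\<Sum>b\<in>B. c b *\<^sub>R b)"
    using fd_core[OF finB indB, of "{0}"] by (auto simp: span_zero)
  define L where "L = (\<lambda>c::'a \<Rightarrow> real. (\<Sum>b\<in>B. c b *\<^sub>R b))"
  define Q where "Q = PiE UNIV (\<lambda>i::'a. if i \<in> B then {-(r/\<delta>)..r/\<delta>} else {0::real})"
  have "compactin (product_topology (\<lambda>i. euclidean) UNIV) Q"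
    unfolding Q_def compactin_PiE by auto
  then have "compact Q" by (simp add: euclidean_product_topology)
  then have cLQ: "compact (L ` Q)" unfolding L_def
    by (intro compact_continuous_image cont_coord_sum)
  have "span B \<inter> cball 0 r = L ` Q \<inter> cball 0 r"
  proof (intro equalityI subsetI)
    fix v assume v: "v \<in> span B \<inter> cball 0 r"
    then obtain u where u: "v = L u" using span_finite[OF finB] unfolding L_def by auto
    define u' where "u' = (\<lambda>i. if i \<in> B then u i else 0)"
    have Lu': "L u' = v" unfolding u L_def u'_def by (intro sum.cong) auto
    have bnd: "\<bar>u' i\<bar> \<le> r / \<delta>" for i
    proof (cases "i \<in> B")
      case True
      have "\<bar>u' i\<bar> \<le> (\<Sum>b\<in>B. \<bar>u' b\<bar>)" using True finB by (intro member_le_sum) auto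
      also have "\<delta> * (\<Sum>b\<in>B. \<bar>u' b\<bar>) \<le> norm v" using core Lu' unfolding L_def by metis
      then have "(\<Sum>b\<in>B. \<bar>u' b\<bar>) \<le> norm v / \<delta>" using dpos by (simp add: le_divide_eq mult.commute)
      also have "norm v / \<delta> \<le> r / \<delta>" using v dpos by (simp add: divide_right_mono)
      finally show ?thesis .
    next
      case False
      then have "u' i = 0" unfolding u'_def by simp
      moreover have "0 \<le> r" using v norm_ge_zero[of v] by (auto simp del: norm_ge_zero)
      ultimately show ?thesis using dpos by simp
    qed
    have "u' i \<in> (if i \<in> B then {-(r/\<delta>)..r/\<delta>} else {0})" for i
    proof (cases "i \<in> B")
      case True then show ?thesis using bnd[of i] by (simp add: u'_def abs_le_iff)
    next
      case False then show ?thesis by (simp add: u'_def)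
    qed
    then have "u' \<in> Q" unfolding Q_def by (simp add: PiE_iff)
    then show "v \<in> L ` Q \<inter> cball 0 r" using Lu' v by auto
  next
    fix v assume "v \<in> L ` Q \<inter> cball 0 r"
    moreover have "L c \<in> span B" for c unfolding L_def
      by (intro span_sum span_scale span_base) auto
    ultimately show "v \<in> span B \<inter> cball 0 r" by auto
  qed
  then show ?thesis using cLQ by auto
qed

lemma fd_functionals:
  fixes B W :: "'a::real_normed_vector set"
  assumes finB: "finite B" and indB: "independent B" and clW: "closed W" and subW: "subspace W"
    and int: "span B \<inter> W = {0}" and dsum: "\<forall>u. \<exists>v\<in>span B. \<exists>w\<in>W. u = v + w"
  shows "\<exists>G::('a \<Rightarrow>\<^sub>L real) set. finite G \<and> (\<forall>g\<in>G. \<forall>w\<in>W. blinfun_apply g w = 0) \<and>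
           (\<forall>x. (\<forall>g\<in>G. blinfun_apply g x = 0) \<longrightarrow> x \<in> W)"
proof -
  obtain \<delta> where dpos: "\<delta> > 0" and core: "\<forall>c. \<forall>w\<in>W. \<delta> * (\<Sum>b\<in>B. \<bar>c b\<bar>) \<le> norm ((\<Sum>b\<in>B. c b *\<^sub>R b) + w)"
    using fd_core[OF finB indB clW subW int] by auto
  define L where "L = (\<lambda>c::'a \<Rightarrow> real. (\<Sum>b\<in>B. c b *\<^sub>R b))"
  define ok where "ok = (\<lambda>u c. (\<forall>i. i \<notin> B \<longrightarrow> c i = 0) \<and> u - L c \<in> W)"
  have Ladd: "L (\<lambda>i. c1 i + c2 i) = L c1 + L c2" for c1 c2
    unfolding L_def by (simp add: scaleR_add_left sum.distrib)
  have Lscale: "L (\<lambda>i. r * c i) = r *\<^sub>R L c" for r c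
    unfolding L_def by (simp add: scaleR_sum_right)
  have Ldiff: "L (\<lambda>i. c1 i - c2 i) = L c1 - L c2" for c1 c2
    unfolding L_def by (simp add: scaleR_diff_left sum_subtractf)
  have exok: "\<exists>c. ok u c" for u
  proof -
    obtain v w where v: "v \<in> span B" and w: "w \<in> W" and u: "u = v + w" using dsum by blast
    then obtain c where "v = L c" using span_finite[OF finB] unfolding L_def by auto
    define c' where "c' = (\<lambda>i. if i \<in> B then c i else 0)"
    have "L c' = v" unfolding \<open>v = L c\<close> L_def c'_def by (intro sum.cong) auto
    then show ?thesis unfolding ok_def using u w by (intro exI[of _ c']) (auto simp: c'_def)
  qed
  have uniq: "c1 = c2" if "ok u c1" "ok u c2" for u c1 c2
  proof -
    have e: "L c2 - L c1 = (u - L c1) - (u - L c2)" by simp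
    have "(u - L c1) - (u - L c2) \<in> W" using subspace_diff[OF subW, of "u - L c1" "u - L c2"] that unfolding ok_def by blast
    then have "L c2 - L c1 \<in> W" unfolding e .
    then have "\<delta> * (\<Sum>b\<in>B. \<bar>c1 b - c2 b\<bar>) \<le> norm (L (\<lambda>i. c1 i - c2 i) + (L c2 - L c1))"
      using core[rule_format, of "L c2 - L c1" "\<lambda>i. c1 i - c2 i"] unfolding L_def by blast
    then have "(\<Sum>b\<in>B. \<bar>c1 b - c2 b\<bar>) \<le> 0" using dpos by (simp add: Ldiff mult_le_0_iff)
    then have z: "(\<Sum>b\<in>B. \<bar>c1 b - c2 b\<bar>) = 0"
      using sum_nonneg[of B "\<lambda>b. \<bar>c1 b - c2 b\<bar>"] by linarith
    have eqB: "c1 b = c2 b" if "b \<in> B" for b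
      using z sum_nonneg_eq_0_iff[OF finB, of "\<lambda>b. \<bar>c1 b - c2 b\<bar>"] that by simp
    show ?thesis
    proof (rule ext)
      fix i show "c1 i = c2 i"
      proof (cases "i \<in> B")
        case True then show ?thesis by (rule eqB)
      next
        case False then show ?thesis using that unfolding ok_def by simp
      qed
    qed
  qed
  define coef where "coef = (\<lambda>u. SOME c. ok u c)"
  have okc: "ok u (coef u)" for u unfolding coef_def using exok by (rule someI_ex)
  have cadd: "coef (u1 + u2) = (\<lambda>i. coef u1 i + coef u2 i)" for u1 u2
  proof (rule uniq[OF okc])
    have e: "(u1 + u2) - L (\<lambda>i. coef u1 i + coef u2 i) = (u1 - L (coef u1)) + (u2 - L (coef u2))"
      unfolding Ladd by (simp add: algebra_simps)
    have "(u1 + u2) - L (\<lambda>i. coef u1 i + coef u2 i) \<in> W"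
      unfolding e using okc[of u1] okc[of u2] subW unfolding ok_def by (simp add: subspace_add)
    then show "ok (u1 + u2) (\<lambda>i. coef u1 i + coef u2 i)"
      using okc[of u1] okc[of u2] unfolding ok_def by simp
  qed
  have cscale: "coef (r *\<^sub>R u) = (\<lambda>i. r * coef u i)" for r u
  proof (rule uniq[OF okc])
    have e: "r *\<^sub>R u - L (\<lambda>i. r * coef u i) = r *\<^sub>R (u - L (coef u))"
      unfolding Lscale by (simp add: scaleR_diff_right)
    have "r *\<^sub>R u - L (\<lambda>i. r * coef u i) \<in> W"
      unfolding e using okc[of u] subW unfolding ok_def by (simp add: subspace_scale)
    then show "ok (r *\<^sub>R u) (\<lambda>i. r * coef u i)"
      using okc[of u] unfolding ok_def by simp
  qed
  have cbound: "\<bar>coef u b\<bar> \<le> norm u * (1/\<delta>)" if "b \<in> B" for u b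
  proof -
    have h1: "\<bar>coef u b\<bar> \<le> (\<Sum>b\<in>B. \<bar>coef u b\<bar>)" using that finB by (intro member_le_sum) auto
    have h2: "\<delta> * (\<Sum>b\<in>B. \<bar>coef u b\<bar>) \<le> norm (L (coef u) + (u - L (coef u)))"
      using core okc[of u] unfolding ok_def L_def by blast
    have h3: "\<delta> * \<bar>coef u b\<bar> \<le> \<delta> * (\<Sum>b\<in>B. \<bar>coef u b\<bar>)"
      by (rule mult_left_mono[OF h1]) (use dpos in simp)
    have e: "L (coef u) + (u - L (coef u)) = u" by simp
    have "\<delta> * (\<Sum>b\<in>B. \<bar>coef u b\<bar>) \<le> norm u" using h2 unfolding e .
    then have "\<delta> * \<bar>coef u b\<bar> \<le> norm u" using h3 by linarith
    then show ?thesis using dpos by (simp add: le_divide_eq mult.commute)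
  qed
  have bl: "bounded_linear (\<lambda>u. coef u b)" if "b \<in> B" for b
  proof (rule bounded_linear_intro[where K="1/\<delta>"])
    show "coef (x + y) b = coef x b + coef y b" for x y by (simp add: cadd)
    show "coef (r *\<^sub>R x) b = r *\<^sub>R coef x b" for r x by (simp add: cscale)
    show "norm (coef x b) \<le> norm x * (1/\<delta>)" for x
      using cbound[OF that, of x] by (simp only: real_norm_def)
  qed
  define G where "G = (\<lambda>b. Blinfun (\<lambda>u. coef u b)) ` B"
  have Gapp: "blinfun_apply (Blinfun (\<lambda>u. coef u b)) u = coef u b" if "b \<in> B" for b u
    using bounded_linear_Blinfun_apply[OF bl[OF that]] by (rule fun_cong)
  have W0: "0 \<in> W" using subW by (simp add: subspace_0)
  have cW: "coef w = (\<lambda>i. 0)" if "w \<in> W" for w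
  proof (rule uniq[OF okc])
    show "ok w (\<lambda>i. 0)" using that unfolding ok_def L_def by simp
  qed
  have G2: "\<forall>g\<in>G. \<forall>w\<in>W. blinfun_apply g w = 0"
  proof (intro ballI)
    fix g w assume g: "g \<in> G" and w: "w \<in> W"
    then obtain b where b: "b \<in> B" and gb: "g = Blinfun (\<lambda>u. coef u b)" unfolding G_def by blast
    show "blinfun_apply g w = 0" unfolding gb Gapp[OF b] cW[OF w] by simp
  qed
  have G3: "x \<in> W" if x: "\<forall>g\<in>G. blinfun_apply g x = 0" for x
  proof -
    have "coef x i = 0" for i
    proof (cases "i \<in> B")
      case True
      then have "Blinfun (\<lambda>u. coef u i) \<in> G" unfolding G_def by blast
      then have "blinfun_apply (Blinfun (\<lambda>u. coef u i)) x = 0" using x by blast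
      then show ?thesis unfolding Gapp[OF True] .
    next
      case False then show ?thesis using okc[of x] unfolding ok_def by blast
    qed
    then have "coef x = (\<lambda>i. 0)" by (rule ext)
    then have "x - L (\<lambda>i. 0) \<in> W" using okc[of x] unfolding ok_def by metis
    then show ?thesis unfolding L_def by simp
  qed
  have G1: "finite G" unfolding G_def using finB by simp
  have "finite G \<and> (\<forall>g\<in>G. \<forall>w\<in>W. blinfun_apply g w = 0) \<and>
           (\<forall>x. (\<forall>g\<in>G. blinfun_apply g x = 0) \<longrightarrow> x \<in> W)"
    using G1 G2 G3 by blast
  then show ?thesis by (rule exI)
qed



lemma lip_cont:
  fixes \<Phi> :: "'a::real_normed_vector \<Rightarrow> real"
  assumes "locally_lipschitz \<Phi>"
  shows "isCont \<Phi> x"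
proof -
  obtain \<epsilon> L where ep: "\<epsilon> > 0" and L: "\<forall>y\<in>ball x \<epsilon>. \<forall>z\<in>ball x \<epsilon>. \<bar>\<Phi> y - \<Phi> z\<bar> \<le> L * norm (y - z)"
    using assms unfolding locally_lipschitz_def by blast
  show ?thesis unfolding continuous_at_eps_delta
  proof (intro allI impI)
    fix e :: real assume "e > 0"
    define d where "d = min \<epsilon> (e / (\<bar>L\<bar> + 1))"
    have dpos: "d > 0" unfolding d_def using ep \<open>e > 0\<close> by auto
    have "dist (\<Phi> x') (\<Phi> x) < e" if "dist x' x < d" for x'
    proof -
      have "x' \<in> ball x \<epsilon>" "x \<in> ball x \<epsilon>" using that ep unfolding d_def by (auto simp: dist_commute)
      then have "\<bar>\<Phi> x' - \<Phi> x\<bar> \<le> L * norm (x' - x)" using L by blast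
      also have "\<dots> \<le> \<bar>L\<bar> * norm (x' - x)" by (simp add: mult_right_mono)
      also have "\<dots> \<le> \<bar>L\<bar> * d" using that by (simp add: dist_norm mult_left_mono)
      also have "\<dots> < (\<bar>L\<bar> + 1) * d" using dpos by simp
      also have "\<dots> \<le> (\<bar>L\<bar> + 1) * (e / (\<bar>L\<bar> + 1))" unfolding d_def
        by (intro mult_left_mono) auto
      also have "\<dots> = e" by simp
      finally show ?thesis by (simp add: dist_real_def)
    qed
    then show "\<exists>d>0. \<forall>x'. dist x' x < d \<longrightarrow> dist (\<Phi> x') (\<Phi> x) < e" using dpos by blast
  qed
qed

theorem corollary10:
  fixes \<Phi> :: "'a::banach \<Rightarrow> real" and V W :: "'a set"
  assumes refl: "reflexive_space TYPE('a)"
    and subV: "subspace V" and subW: "subspace W"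
    and dsum_int: "V \<inter> W = {0}"
    and dsum_span: "\<forall>u. \<exists>v\<in>V. \<exists>w\<in>W. u = v + w"
    and finV: "\<exists>B. finite B \<and> V = span B"
    and lip: "locally_lipschitz \<Phi>"
    and i: "\<forall>M. \<exists>R. \<forall>w\<in>W. norm w \<ge> R \<longrightarrow> \<Phi> w \<ge> M"
    and ii: "\<forall>w\<in>W. strictly_quasi_concave_on V (\<lambda>v. \<Phi> (v + w))"
    and iii: "\<forall>r M. \<exists>R. \<forall>v\<in>V. \<forall>w\<in>W. norm w \<le> r \<and> norm v \<ge> R \<longrightarrow> \<Phi> (v + w) \<le> M"
    and iv: "\<forall>v\<in>V. weakly_lsc_on W (\<lambda>w. \<Phi> (v + w))"
  shows "(\<forall>w\<in>W. \<exists>!v. v \<in> V \<and> (\<forall>v'\<in>V. \<Phi> (v' + w) \<le> \<Phi> (v + w))) \<and>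
    (\<exists>wbar\<in>W.
       let s = (\<lambda>w. THE v. v \<in> V \<and> (\<forall>v'\<in>V. \<Phi> (v' + w) \<le> \<Phi> (v + w)));
           ubar = s wbar + wbar
       in (\<forall>w\<in>W. \<Phi> ubar \<le> \<Phi> (s w + w)) \<and>
          0 \<in> clarke_subdiff \<Phi> ubar \<and>
          \<Phi> ubar = (INF w\<in>W. SUP v\<in>V. \<Phi> (v + w)))"
proof -
  have cont: "isCont \<Phi> x" for x using lip by (rule lip_cont)
  have contU: "continuous_on A \<Phi>" for A by (intro continuous_at_imp_continuous_on ballI cont)
  have W0: "0 \<in> W" using subW by (simp add: subspace_0)
  have V0: "0 \<in> V" using subV by (simp add: subspace_0)
  have clW: "closed W"
  proof -
    have "x \<in> W" if xc: "x \<in> closure W" for x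
    proof -
      obtain v w where v: "v \<in> V" and w: "w \<in> W" and xvw: "x = v + w" using dsum_span by blast
      have "v = 0"
      proof (rule ccontr)
        assume vnz: "v \<noteq> 0"
        obtain R1 where R1: "\<forall>v'\<in>V. \<forall>w'\<in>W. norm w' \<le> 0 \<and> norm v' \<ge> R1 \<longrightarrow> \<Phi> (v' + w') \<le> 0"
          using iii by blast
        obtain R2 where R2: "\<forall>w'\<in>W. norm w' \<ge> R2 \<longrightarrow> \<Phi> w' \<ge> 1" using i by blast
        define lam where "lam = (\<bar>R1\<bar> + \<bar>R2\<bar> + 1) / norm v"
        have lpos: "lam > 0" unfolding lam_def using vnz by auto
        define y where "y = lam *\<^sub>R v"
        have ny: "norm y = \<bar>R1\<bar> + \<bar>R2\<bar> + 1" unfolding y_def lam_def using vnz by simp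
        have yV: "y \<in> V" unfolding y_def using subV v by (simp add: subspace_scale)
        have Phy: "\<Phi> y \<le> 0" using R1[rule_format, OF yV W0] ny by simp
        have "\<exists>d>0. \<forall>z. dist z y < d \<longrightarrow> dist (\<Phi> z) (\<Phi> y) < 1/2"
          using cont[of y, unfolded continuous_at_eps_delta, rule_format, of "1/2"] by simp
        then obtain d where d: "d > 0" and dd: "\<forall>z. dist z y < d \<longrightarrow> dist (\<Phi> z) (\<Phi> y) < 1/2"
          by blast
        define e where "e = min d 1 / lam"
        have epos: "e > 0" unfolding e_def using d lpos by simp
        obtain w' where w': "w' \<in> W" and dw': "dist w' x < e"
          using xc epos unfolding closure_approachable by blast
        define z where "z = lam *\<^sub>R (w' - w)"
        have zW: "z \<in> W" unfolding z_def using subW w w' by (simp add: subspace_scale subspace_diff)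
        have zy: "z - y = lam *\<^sub>R (w' - x)" unfolding z_def y_def xvw by (simp add: algebra_simps)
        have "dist z y = lam * dist w' x" unfolding dist_norm zy using lpos by simp
        also have "\<dots> < lam * e" using dw' lpos by simp
        also have "\<dots> = min d 1" unfolding e_def using lpos by simp
        finally have dzy: "dist z y < min d 1" .
        have "norm y \<le> norm z + norm (y - z)" using norm_triangle_ineq[of z "y - z"] by simp
        then have "norm y \<le> norm z + dist z y" by (simp add: dist_norm norm_minus_commute)
        then have "norm z \<ge> R2" using ny dzy by linarith
        then have "\<Phi> z \<ge> 1" using R2 zW by blast
        moreover have "dist (\<Phi> z) (\<Phi> y) < 1/2" using dd dzy by simp
        ultimately show False using Phy by (simp add: dist_real_def)
      qed
      then show ?thesis using xvw w by simp
    qed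
    then show ?thesis using closure_subset_eq by blast
  qed
  obtain B0 where finB0: "finite B0" and VB0: "V = span B0" using finV by blast
  obtain B where BB0: "B \<subseteq> B0" and indB: "independent B" and B0B: "B0 \<subseteq> span B"
    by (rule maximal_independent_subset)
  have finB: "finite B" using finite_subset[OF BB0 finB0] .
  have VB: "V = span B"
  proof -
    have "span B \<subseteq> span B0" by (rule span_mono[OF BB0])
    moreover have "span B0 \<subseteq> span B" by (rule span_minimal[OF B0B subspace_span])
    ultimately show ?thesis unfolding VB0 by blast
  qed
  have intB: "span B \<inter> W = {0}" using dsum_int VB by simp
  have cptV: "compact (V \<inter> cball 0 r)" for r unfolding VB by (rule fd_compact[OF finB indB])
  obtain G :: "('a \<Rightarrow>\<^sub>L real) set" where finG: "finite G" and G0: "\<forall>g\<in>G. \<forall>w\<in>W. blinfun_apply g w = 0"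
    and GW: "\<forall>x. (\<forall>g\<in>G. blinfun_apply g x = 0) \<longrightarrow> x \<in> W"
  proof -
    have dsB: "\<forall>u. \<exists>v\<in>span B. \<exists>w\<in>W. u = v + w" using dsum_span unfolding VB .
    show ?thesis using fd_functionals[OF finB indB clW subW intB dsB] that by blast
  qed
  have exmax: "\<exists>v\<in>V. \<forall>v'\<in>V. \<Phi> (v' + w) \<le> \<Phi> (v + w)" if wW: "w \<in> W" for w
  proof -
    obtain R where R: "\<forall>v\<in>V. \<forall>w'\<in>W. norm w' \<le> norm w \<and> norm v \<ge> R \<longrightarrow> \<Phi> (v + w') \<le> \<Phi> w - 1"
      using iii by blast
    define K where "K = V \<inter> cball 0 \<bar>R\<bar>"
    have "compact K" unfolding K_def by (rule cptV)
    moreover have "K \<noteq> {}" unfolding K_def using V0 by auto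
    moreover have "continuous_on K (\<lambda>v. \<Phi> (v + w))"
      by (intro continuous_on_compose2[OF contU[of UNIV]] continuous_intros) auto
    ultimately obtain v0 where v0: "v0 \<in> K" and mx: "\<forall>v\<in>K. \<Phi> (v + w) \<le> \<Phi> (v0 + w)"
      using continuous_attains_sup by blast
    have "\<Phi> (v' + w) \<le> \<Phi> (v0 + w)" if "v' \<in> V" for v'
    proof (cases "norm v' \<le> \<bar>R\<bar>")
      case True then show ?thesis using mx that unfolding K_def by auto
    next
      case False
      then have "\<Phi> (v' + w) \<le> \<Phi> w - 1" using R that wW by auto
      moreover have "0 \<in> K" unfolding K_def using V0 by simp
      then have "\<Phi> (0 + w) \<le> \<Phi> (v0 + w)" using mx by blast
      ultimately show ?thesis by simp
    qed
    then show ?thesis using v0 unfolding K_def by blast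
  qed
  have unimax: "v1 = v2" if wW: "w \<in> W" and v1: "v1 \<in> V" "\<forall>v'\<in>V. \<Phi> (v' + w) \<le> \<Phi> (v1 + w)"
    and v2: "v2 \<in> V" "\<forall>v'\<in>V. \<Phi> (v' + w) \<le> \<Phi> (v2 + w)" for w v1 v2
  proof (rule ccontr)
    assume ne: "v1 \<noteq> v2"
    have sq: "strictly_quasi_concave_on V (\<lambda>v. \<Phi> (v + w))" using ii wW by blast
    define vm where "vm = (1/2::real) *\<^sub>R v1 + (1 - 1/2) *\<^sub>R v2"
    have "\<Phi> (vm + w) > min (\<Phi> (v1 + w)) (\<Phi> (v2 + w))"
      using sq v1(1) v2(1) ne unfolding strictly_quasi_concave_on_def vm_def
      by (elim ballE[of _ _ v1] ballE[of _ _ v2]) (auto dest: spec[of _ "1/2"])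
    moreover have "vm \<in> V" unfolding vm_def using subV v1(1) v2(1)
      by (intro subspace_add subspace_scale) auto
    moreover have "\<Phi> (vm + w) \<le> \<Phi> (v1 + w)" "\<Phi> (vm + w) \<le> \<Phi> (v2 + w)"
      using v1(2) v2(2) \<open>vm \<in> V\<close> by auto
    ultimately show False by linarith
  qed
  have part1: "\<forall>w\<in>W. \<exists>!v. v \<in> V \<and> (\<forall>v'\<in>V. \<Phi> (v' + w) \<le> \<Phi> (v + w))"
    using exmax unimax by blast
  define s where "s = (\<lambda>w. THE v. v \<in> V \<and> (\<forall>v'\<in>V. \<Phi> (v' + w) \<le> \<Phi> (v + w)))"
  have sprop: "s w \<in> V \<and> (\<forall>v'\<in>V. \<Phi> (v' + w) \<le> \<Phi> (s w + w))" if "w \<in> W" for w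
    unfolding s_def by (rule theI') (use part1 that in blast)
  have sV: "s w \<in> V" if "w \<in> W" for w using sprop[OF that] by blast
  have smax: "\<Phi> (v' + w) \<le> \<Phi> (s w + w)" if "w \<in> W" "v' \<in> V" for w v'
    using sprop[OF that(1)] that(2) by blast
  have suniq: "v = s w" if "w \<in> W" "v \<in> V" "\<forall>v'\<in>V. \<Phi> (v' + w) \<le> \<Phi> (v + w)" for w v
    using unimax[OF that(1) that(2,3) sV[OF that(1)]] smax[OF that(1)] by blast
  define m where "m = (\<lambda>w. \<Phi> (s w + w))"
  have mge: "\<Phi> w \<le> m w" if "w \<in> W" for w using smax[OF that V0] unfolding m_def by simp
  have exmin: "\<exists>wb\<in>W. \<forall>w\<in>W. m wb \<le> m w"
  proof (rule ccontr)
    assume "\<not> ?thesis"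
    then have lower: "\<exists>w'\<in>W. m w' < m w" if "w \<in> W" for w using that by (auto simp: not_le)
    define Fl where "Fl = (INF c\<in>m`W. principal {w\<in>W. m w < c})"
    have evF: "eventually P Fl \<longleftrightarrow> (\<exists>c\<in>m`W. eventually P (principal {w\<in>W. m w < c}))" for P
      unfolding Fl_def
    proof (rule eventually_INF_base)
      show "m ` W \<noteq> {}" using W0 by auto
      fix a b assume "a \<in> m ` W" "b \<in> m ` W"
      then show "\<exists>x\<in>m ` W. principal {w \<in> W. m w < x} \<le>
                   inf (principal {w \<in> W. m w < a}) (principal {w \<in> W. m w < b})"
        by (intro bexI[of _ "min a b"]) (auto simp: min_def)
    qed
    have Fnb: "Fl \<noteq> bot"
    proof
      assume "Fl = bot"
      then have "eventually (\<lambda>_. False) Fl" by simp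
      then obtain c where "c \<in> m ` W" and "eventually (\<lambda>_. False) (principal {w\<in>W. m w < c})"
        unfolding evF by blast
      then obtain w0 where "w0 \<in> W" "{w\<in>W. m w < m w0} = {}" by (auto simp: eventually_principal)
      then show False using lower by blast
    qed
    have evW: "eventually (\<lambda>u. u \<in> W \<and> m u < m w0) Fl" if "w0 \<in> W" for w0
      unfolding evF using that by (intro bexI[of _ "m w0"]) (auto simp: eventually_principal)
    obtain R0 where R0: "\<forall>w\<in>W. norm w \<ge> R0 \<longrightarrow> \<Phi> w \<ge> m 0" using i by blast
    have bnd: "eventually (\<lambda>u. norm u \<le> R0) Fl"
    proof (rule eventually_mono[OF evW[OF W0]])
      fix u assume u: "u \<in> W \<and> m u < m 0"
      show "norm u \<le> R0"
      proof (rule ccontr)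
        assume "\<not> norm u \<le> R0"
        then have "\<Phi> u \<ge> m 0" using R0 u by auto
        moreover have "\<Phi> u \<le> m u" using mge u by blast
        ultimately show False using u by simp
      qed
    qed
    obtain x where x: "\<forall>G'::('a \<Rightarrow>\<^sub>L real) set. finite G' \<longrightarrow> (\<forall>\<epsilon>>0. \<exists>\<^sub>F u in Fl.
        \<forall>f\<in>G'. \<bar>blinfun_apply f u - blinfun_apply f x\<bar> < \<epsilon>)"
      using weak_cluster[OF refl Fnb bnd] by blast
    have xW: "x \<in> W"
    proof -
      have "blinfun_apply g x = 0" if gG: "g \<in> G" for g
      proof (rule eps_zero[where C=1])
        fix e :: real assume "e > 0"
        then have "\<exists>\<^sub>F u in Fl. \<forall>f\<in>{g}. \<bar>blinfun_apply f u - blinfun_apply f x\<bar> < e"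
          using x by blast
        then have "\<exists>\<^sub>F u in Fl. (u \<in> W \<and> m u < m 0) \<and> \<bar>blinfun_apply g u - blinfun_apply g x\<bar> < e"
          using frequently_eventually_conj[OF _ evW[OF W0]] by simp
        then obtain u where "u \<in> W" "\<bar>blinfun_apply g u - blinfun_apply g x\<bar> < e"
          using frequently_ex by blast
        moreover have "blinfun_apply g u = 0" using G0 gG \<open>u \<in> W\<close> by blast
        ultimately show "\<bar>blinfun_apply g x - 0\<bar> < 1 * e" by simp
      qed simp
      then show ?thesis using GW by blast
    qed
    obtain w1 where w1: "w1 \<in> W" "m w1 < m x" using lower[OF xW] by blast
    have "weakly_lsc_on W (\<lambda>w. \<Phi> (s x + w))" using iv sV[OF xW] by blast
    then obtain Fn :: "('a \<Rightarrow>\<^sub>L real) set" and \<epsilon> where ep: "\<epsilon> > 0" and finFn: "finite Fn"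
      and nb: "\<forall>w\<in>W. (\<forall>f\<in>Fn. \<bar>blinfun_apply f (w - x)\<bar> < \<epsilon>) \<longrightarrow> m w1 < \<Phi> (s x + w)"
      using xW w1(2) unfolding weakly_lsc_on_def m_def by blast
    have "\<exists>\<^sub>F u in Fl. \<forall>f\<in>Fn. \<bar>blinfun_apply f u - blinfun_apply f x\<bar> < \<epsilon>"
      using x finFn ep by blast
    then have "\<exists>\<^sub>F u in Fl. (u \<in> W \<and> m u < m w1) \<and> (\<forall>f\<in>Fn. \<bar>blinfun_apply f u - blinfun_apply f x\<bar> < \<epsilon>)"
      using frequently_eventually_conj[OF _ evW[OF w1(1)]] by simp
    then obtain u where u: "u \<in> W" "m u < m w1" and uc: "\<forall>f\<in>Fn. \<bar>blinfun_apply f u - blinfun_apply f x\<bar> < \<epsilon>"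
      using frequently_ex by blast
    have "\<forall>f\<in>Fn. \<bar>blinfun_apply f (u - x)\<bar> < \<epsilon>" using uc by (simp add: blinfun.diff_right)
    then have "m w1 < \<Phi> (s x + u)" using nb u(1) by blast
    moreover have "\<Phi> (s x + u) \<le> m u" unfolding m_def using smax[OF u(1) sV[OF xW]] .
    ultimately show False using u(2) by simp
  qed
  then obtain wbar where wbW: "wbar \<in> W" and wbmin: "\<forall>w\<in>W. m wbar \<le> m w" by blast
  define ubar where "ubar = s wbar + wbar"
  have key: "\<exists>t. 0 < t \<and> t < \<tau> \<and> norm (s (wbar + t *\<^sub>R w) - s wbar) < \<delta>"
    if wW: "w \<in> W" and tau: "\<tau> > 0" and dl: "\<delta> > 0" for w \<tau> \<delta>
  proof -
    define t where "t = (\<lambda>n::nat. \<tau> / real (n + 2))"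
    have tpos: "0 < t n" for n unfolding t_def using tau by simp
    have tlt: "t n < \<tau>" for n unfolding t_def using tau by (simp add: divide_less_eq)
    have tlim: "t \<longlonglongrightarrow> 0"
      unfolding t_def using LIMSEQ_ignore_initial_segment[OF lim_const_over_n[of \<tau>], of 2] by simp
    define ww where "ww = (\<lambda>n. wbar + t n *\<^sub>R w)"
    have wwW: "ww n \<in> W" for n unfolding ww_def using subW wbW wW by (simp add: subspace_add subspace_scale)
    have wwlim: "ww \<longlonglongrightarrow> wbar" unfolding ww_def
      using tendsto_add[OF tendsto_const tendsto_scaleR[OF tlim tendsto_const], of wbar w] by simp
    have "(\<lambda>n. \<Phi> (ww n)) \<longlonglongrightarrow> \<Phi> wbar" by (rule isCont_tendsto_compose[OF cont wwlim])
    then have "eventually (\<lambda>n. \<Phi> (ww n) > \<Phi> wbar - 1) sequentially"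
      by (rule order_tendstoD) simp
    then obtain N where N: "\<forall>n\<ge>N. \<Phi> (ww n) > \<Phi> wbar - 1" unfolding eventually_sequentially by blast
    obtain R where R: "\<forall>v\<in>V. \<forall>w'\<in>W. norm w' \<le> norm wbar + \<tau> * norm w \<and> norm v \<ge> R \<longrightarrow>
        \<Phi> (v + w') \<le> \<Phi> wbar - 1" using iii by blast
    define a where "a = (\<lambda>k. s (ww (k + N)))"
    have aK: "a k \<in> V \<inter> cball 0 \<bar>R\<bar>" for k
    proof -
      have aV: "a k \<in> V" unfolding a_def by (rule sV[OF wwW])
      have "norm (a k) < R"
      proof (rule ccontr)
        assume "\<not> norm (a k) < R"
        moreover have "norm (ww (k + N)) \<le> norm wbar + \<tau> * norm w"
        proof -
          have "norm (ww (k + N)) \<le> norm wbar + norm (t (k + N) *\<^sub>R w)"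
            unfolding ww_def by (rule norm_triangle_ineq)
          also have "norm (t (k + N) *\<^sub>R w) = t (k + N) * norm w" using tpos[of "k + N"] by simp
          also have "\<dots> \<le> \<tau> * norm w" using tlt[of "k + N"] by (simp add: mult_right_mono)
          finally show ?thesis by simp
        qed
        ultimately have "\<Phi> (a k + ww (k + N)) \<le> \<Phi> wbar - 1" using R aV wwW by simp
        moreover have "\<Phi> (ww (k + N)) > \<Phi> wbar - 1" using N by simp
        moreover have "\<Phi> (ww (k + N)) \<le> \<Phi> (a k + ww (k + N))"
          using mge[OF wwW] unfolding a_def m_def by simp
        ultimately show False by simp
      qed
      then show ?thesis using aV by simp
    qed
    have "seq_compact (V \<inter> cball 0 \<bar>R\<bar>)" by (rule compact_imp_seq_compact[OF cptV])
    then obtain l r where lK: "l \<in> V \<inter> cball 0 \<bar>R\<bar>" and r: "strict_mono r" and alim: "(a \<circ> r) \<longlonglongrightarrow> l"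
      using aK by (metis seq_compactE)
    have wwr: "((\<lambda>n. ww (n + N)) \<circ> r) \<longlonglongrightarrow> wbar"
      by (rule LIMSEQ_subseq_LIMSEQ[OF LIMSEQ_ignore_initial_segment[OF wwlim] r])
    have lmax: "\<Phi> (v' + wbar) \<le> \<Phi> (l + wbar)" if "v' \<in> V" for v'
    proof (rule tendsto_le[OF trivial_limit_sequentially])
      show "(\<lambda>k. \<Phi> (((a \<circ> r) k) + ((\<lambda>n. ww (n + N)) \<circ> r) k)) \<longlonglongrightarrow> \<Phi> (l + wbar)"
        by (rule isCont_tendsto_compose[OF cont tendsto_add[OF alim wwr]])
      show "(\<lambda>k. \<Phi> (v' + ((\<lambda>n. ww (n + N)) \<circ> r) k)) \<longlonglongrightarrow> \<Phi> (v' + wbar)"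
        by (rule isCont_tendsto_compose[OF cont tendsto_add[OF tendsto_const wwr]])
      show "\<forall>\<^sub>F k in sequentially. \<Phi> (v' + ((\<lambda>n. ww (n + N)) \<circ> r) k) \<le> \<Phi> (((a \<circ> r) k) + ((\<lambda>n. ww (n + N)) \<circ> r) k)"
        using smax[OF wwW that] unfolding a_def by simp
    qed
    have "l = s wbar" using suniq[OF wbW] lK lmax by blast
    then have "eventually (\<lambda>k. dist ((a \<circ> r) k) (s wbar) < \<delta>) sequentially"
      using alim dl by (simp add: tendsto_iff)
    then obtain k where "dist ((a \<circ> r) k) (s wbar) < \<delta>" by (meson eventually_sequentially order_refl)
    then have "norm (s (wbar + t (r k + N) *\<^sub>R w) - s wbar) < \<delta>"
      unfolding a_def ww_def by (simp add: dist_norm)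
    then show ?thesis using tpos tlt by blast
  qed
  have clarke: "0 \<in> clarke_subdiff \<Phi> ubar"
    unfolding clarke_subdiff_def
  proof (intro CollectI allI)
    fix h
    obtain v w where vV: "v \<in> V" and wW: "w \<in> W" and hvw: "h = v + w" using dsum_span by blast
    show "ereal (blinfun_apply 0 h) \<le> clarke_dd \<Phi> ubar h"
      unfolding clarke_dd_def Limsup_def
    proof (simp only: blinfun.zero_left, rule INF_greatest)
      fix P assume "P \<in> {P. eventually P (nhds ubar \<times>\<^sub>F at_right (0::real))}"
      then obtain Pf Pg where Pf: "eventually Pf (nhds ubar)" and Pg: "eventually Pg (at_right (0::real))"
        and PP: "\<forall>x y. Pf x \<longrightarrow> Pg y \<longrightarrow> P (x, y)" unfolding eventually_prod_filter by auto
      obtain d where d: "d > 0" and dPf: "\<forall>y. dist y ubar < d \<longrightarrow> Pf y"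
        using Pf unfolding eventually_nhds_metric by blast
      obtain b where b: "b > 0" and bPg: "\<forall>t>0. t < b \<longrightarrow> Pg t"
        using Pg unfolding eventually_at_right_field by blast
      define \<tau> where "\<tau> = min b (d / (2 * (norm v + 1)))"
      have np: "0 < 2 * (norm v + 1)" using norm_ge_zero[of v] by (smt (verit))
      have taupos: "\<tau> > 0" unfolding \<tau>_def using b divide_pos_pos[OF d np] by linarith
      obtain t where t0: "0 < t" and tt: "t < \<tau>" and ts: "norm (s (wbar + t *\<^sub>R w) - s wbar) < d / 2"
        using key[OF wW taupos, of "d/2"] d by auto
      define wt where "wt = wbar + t *\<^sub>R w"
      have wtW: "wt \<in> W" unfolding wt_def using subW wbW wW by (simp add: subspace_add subspace_scale)
      define y where "y = s wt + wbar - t *\<^sub>R v"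
      have "t * norm v \<le> \<tau> * (norm v + 1)" using tt t0 by (intro mult_mono) auto
      also have "\<dots> \<le> d / (2 * (norm v + 1)) * (norm v + 1)" unfolding \<tau>_def
        by (intro mult_right_mono) auto
      also have "\<dots> = d / 2"
      proof -
        have n1: "norm v + 1 \<noteq> 0" using norm_ge_zero[of v] by (smt (verit))
        show ?thesis using n1 by (simp add: field_simps)
      qed
      finally have tv: "t * norm v \<le> d / 2" .
      have "dist y ubar = norm ((s wt - s wbar) - t *\<^sub>R v)"
        unfolding y_def ubar_def dist_norm by (simp add: algebra_simps)
      also have "\<dots> \<le> norm (s wt - s wbar) + norm (t *\<^sub>R v)" by (rule norm_triangle_ineq4)
      also have "\<dots> < d" using ts tv t0 unfolding wt_def by simp
      finally have "Pf y" using dPf by blast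
      moreover have "Pg t" using bPg t0 tt unfolding \<tau>_def by simp
      ultimately have Pyt: "P (y, t)" using PP by blast
      have yth: "y + t *\<^sub>R h = s wt + wt" unfolding y_def wt_def hvw by (simp add: algebra_simps)
      have svV: "s wt - t *\<^sub>R v \<in> V" using subV sV[OF wtW] vV by (simp add: subspace_diff subspace_scale)
      have "\<Phi> y = \<Phi> ((s wt - t *\<^sub>R v) + wbar)" unfolding y_def by (simp add: algebra_simps)
      also have "\<dots> \<le> m wbar" unfolding m_def by (rule smax[OF wbW svV])
      also have "\<dots> \<le> m wt" using wbmin wtW by blast
      also have "\<dots> = \<Phi> (y + t *\<^sub>R h)" unfolding m_def yth ..
      finally have "0 \<le> (\<Phi> (y + t *\<^sub>R h) - \<Phi> y) / t" using t0 by simp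
      then have "ereal 0 \<le> (\<lambda>(y, t). ereal ((\<Phi> (y + t *\<^sub>R h) - \<Phi> y) / t)) (y, t)" by simp
      then show "ereal 0 \<le> (SUP x\<in>Collect P. (\<lambda>(y, t). ereal ((\<Phi> (y + t *\<^sub>R h) - \<Phi> y) / t)) x)"
        using Pyt by (intro SUP_upper2[of "(y, t)"]) auto
    qed
  qed
  have supeq: "(SUP v\<in>V. \<Phi> (v + w)) = m w" if "w \<in> W" for w
    unfolding m_def using sV[OF that] smax[OF that] by (intro cSup_eq_maximum) auto
  have infeq: "(INF w\<in>W. SUP v\<in>V. \<Phi> (v + w)) = m wbar"
  proof -
    have "(INF w\<in>W. SUP v\<in>V. \<Phi> (v + w)) = (INF w\<in>W. m w)"
      using supeq by (intro INF_cong) auto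
    also have "\<dots> = m wbar" using wbW wbmin by (intro cInf_eq_minimum) auto
    finally show ?thesis .
  qed
  have main: "(\<forall>w\<in>W. \<Phi> ubar \<le> \<Phi> (s w + w)) \<and> 0 \<in> clarke_subdiff \<Phi> ubar \<and>
      \<Phi> ubar = (INF w\<in>W. SUP v\<in>V. \<Phi> (v + w))"
    using wbmin clarke infeq unfolding ubar_def m_def by simp
  show ?thesis
  proof (intro conjI part1 bexI[of _ wbar] wbW)
    show "let s = (\<lambda>w. THE v. v \<in> V \<and> (\<forall>v'\<in>V. \<Phi> (v' + w) \<le> \<Phi> (v + w)));
           ubar = s wbar + wbar
       in (\<forall>w\<in>W. \<Phi> ubar \<le> \<Phi> (s w + w)) \<and>
          0 \<in> clarke_subdiff \<Phi> ubar \<and>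
          \<Phi> ubar = (INF w\<in>W. SUP v\<in>V. \<Phi> (v + w))"
      unfolding s_def[symmetric] Let_def ubar_def[symmetric] by (rule main)
  qed
qed

end
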